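(* Let $q\neq-1$ be real and let $0\le j\le n$ be integers. Then $$\sum_{k=0}^{\lfloor n/2\rfloor}q^{\binom{n-2k}{2}}\begin{bmatrix} n\\ 2k\end{bmatrix}_q\begin{bmatrix} k\\ j\end{bmatrix}_{q^2}=\frac{(1+q)\cdots(1+q^{n-1})}{(1+q)\cdots(1+q^{j})\cdot(1+q^{n-j})\cdots(1+q^{n-1})}\,\frac{[n]_q}{[n-j]_q}\begin{bmatrix} n-j\\ j\end{bmatrix}_q$$ and $$\sum_{k=0}^{\lfloor n/2\rfloor}q^{\binom{n-2k}{2}}\begin{bmatrix} n+1\\ 2k+1\end{bmatrix}_q\begin{bmatrix} k\\ j\end{bmatrix}_{q^2}=(1+q^{j+1})\cdots(1+q^{n-j})\begin{bmatrix} n-j\\ j\end{bmatrix}_q.$$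
   Context: For a parameter $p$: $[m]_p=1+p+\cdots+p^{m-1}$, $[m]_p!=[1]_p\cdots[m]_p$, $\begin{bmatrix} m\\ i\end{bmatrix}_p=\frac{[m]_p!}{[i]_p![m-i]_p!}$ for $0\le i\le m$ and $0$ otherwise (in particular for $m<0$ or $i>m$). Empty products equal $1$; $\binom{0}{2}=\binom{1}{2}=0$. When $n=j=0$ the factor $\frac{[n]_q}{[n-j]_q}$ is read as $1$. *)

theory Defs
  imports Complex_Main
begin

definition qint :: "real \<Rightarrow> nat \<Rightarrow> real" where
  "qint p m = (\<Sum>i<m. p ^ i)"

definition qfact :: "real \<Rightarrow> nat \<Rightarrow> real" where
  "qfact p m = (\<Prod>i=1..m. qint p i)"

definition qbinom :: "real \<Rightarrow> nat \<Rightarrow> nat \<Rightarrow> real" where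
  "qbinom p m i = (if i \<le> m then qfact p m / (qfact p i * qfact p (m - i)) else 0)"

end

theory Submission
  imports Defs
begin


lemma qint_0[simp]: "qint p 0 = 0" by (simp add: qint_def)
lemma qint_Suc: "qint p (Suc m) = qint p m + p^m" by (simp add: qint_def)
lemma qint_add: "qint p (a+b) = qint p a + p^a * qint p b"
  by (induction b) (simp_all add: qint_Suc algebra_simps power_add)
lemma qint_geom: "(1-p) * qint p m = 1 - p^m"
proof (induction m)
  case 0 then show ?case by simp
next
  case (Suc m)
  have "(1-p) * qint p (Suc m) = (1-p)*qint p m + (1-p)*p^m" by (simp add: qint_Suc algebra_simps)
  also have "\<dots> = 1 - p^Suc m" using Suc by (simp add: algebra_simps)
  finally show ?case .
qed
lemma qint_nonzero:
  assumes "p \<noteq> -1" "m > 0" shows "qint p m \<noteq> 0"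
proof
  assume z: "qint p m = 0"
  show False
  proof (cases "p = 1")
    case True
    then have "qint p m = real m" by (simp add: qint_def)
    with z assms show False by simp
  next
    case False
    from qint_geom[of p m] z have "p^m = 1" by simp
    then have "\<bar>p\<bar>^m = 1" by (simp add: power_abs[symmetric])
    then have "\<bar>p\<bar>^m = 1^m" by simp
    then have "\<bar>p\<bar> = 1" using assms(2) power_eq_iff_eq_base[of m "\<bar>p\<bar>" 1] by simp
    with False assms(1) show False by linarith
  qed
qed
lemma qint_double: "qint p (2*k) = (1+p^k)*qint p k"
  unfolding mult_2 qint_add by (simp add: algebra_simps)
lemma qint_sq: "(1+p)*qint (p^2) k = qint p (2*k)"
  by (induction k) (simp_all add: qint_Suc algebra_simps power_mult[symmetric] mult_2 power_add)

lemma qfact_0[simp]: "qfact p 0 = 1" by (simp add: qfact_def)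
lemma qfact_Suc: "qfact p (Suc m) = qfact p m * qint p (Suc m)"
  by (simp add: qfact_def prod.nat_ivl_Suc' mult.commute)
lemma qfact_nonzero: assumes "p \<noteq> -1" shows "qfact p m \<noteq> 0"
proof -
  have "\<forall>a\<in>{1..m}. qint p a \<noteq> 0" using qint_nonzero[OF assms] by auto
  then show ?thesis by (simp add: qfact_def)
qed

lemma qbinom_0: assumes "p \<noteq> -1" shows "qbinom p m 0 = 1"
  using qfact_nonzero[OF assms, of m] by (simp add: qbinom_def)
lemma qbinom_gt: "i > m \<Longrightarrow> qbinom p m i = 0" by (simp add: qbinom_def)
lemma qbinom_diag: assumes "p \<noteq> -1" shows "qbinom p m m = 1"
  using qfact_nonzero[OF assms, of m] by (simp add: qbinom_def)
lemma qbinom_0_left: "qbinom p 0 i = (if i = 0 then 1 else 0)" by (simp add: qbinom_def)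

lemma qbinom_pascal:
  assumes "p \<noteq> -1"
  shows "qbinom p (Suc m) (Suc i) = qbinom p m i + p^(Suc i) * qbinom p m (Suc i)"
proof (cases "i < m")
  case True
  define d where "d = m - Suc i"
  have md: "m - i = Suc d" and md2: "m - Suc i = d" using True by (simp_all add: d_def)
  have nz: "qfact p k \<noteq> 0" for k using qfact_nonzero[OF assms] .
  have nz2: "qint p (Suc k) \<noteq> 0" for k using qint_nonzero[OF assms] by simp
  have m: "m = Suc i + d" using md by simp
  have e: "qint p (Suc m) = qint p (Suc i) + p^(Suc i) * qint p (Suc d)"
    using qint_add[of p "Suc i" "Suc d"] by (simp add: m)
  have b1: "qbinom p (Suc m) (Suc i) = qfact p m * qint p (Suc m) / (qfact p i * qint p (Suc i) * (qfact p d * qint p (Suc d)))"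
    unfolding qbinom_def using True md by (simp add: qfact_Suc)
  have b2: "qbinom p m i = qfact p m / (qfact p i * (qfact p d * qint p (Suc d)))"
    unfolding qbinom_def using True md by (simp add: qfact_Suc)
  have b3: "qbinom p m (Suc i) = qfact p m / (qfact p i * qint p (Suc i) * qfact p d)"
    unfolding qbinom_def using True md2 by (simp add: qfact_Suc)
  have g1: "\<And>a b c X U V::real. a \<noteq> 0 \<Longrightarrow> b \<noteq> 0 \<Longrightarrow> U \<noteq> 0 \<Longrightarrow> V \<noteq> 0 \<Longrightarrow>
     X*(a+c*b)/(U*a*(V*b)) = X/(U*(V*b)) + c*(X/(U*a*V))"
    by (simp add: field_simps)
  show ?thesis unfolding b1 b2 b3 e
    by (rule g1) (use nz nz2 in auto)
next
  case False
  show ?thesis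
  proof (cases "i = m")
    case True
    then show ?thesis using qbinom_diag[OF assms] qbinom_gt[of m "Suc m"] by simp
  next
    case False
    then have "Suc i > Suc m" using \<open>\<not> i < m\<close> by simp
    then show ?thesis using qbinom_gt[of m "Suc i"] qbinom_gt[of m i] qbinom_gt[of "Suc m" "Suc i"] by simp
  qed
qed

lemma qbinom_ratio:
  assumes "p \<noteq> -1" "i \<le> m"
  shows "qbinom p (Suc m) i * qint p (Suc m - i) = qint p (Suc m) * qbinom p m i"
proof -
  have nz2: "qint p (Suc k) \<noteq> 0" for k using qint_nonzero[OF assms(1)] by simp
  have s: "Suc m - i = Suc (m - i)" using assms by simp
  have b1: "qbinom p (Suc m) i = qfact p m * qint p (Suc m) / (qfact p i * (qfact p (m-i) * qint p (Suc (m-i))))"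
    unfolding qbinom_def using assms s by (simp add: qfact_Suc)
  have b2: "qbinom p m i = qfact p m / (qfact p i * qfact p (m-i))"
    unfolding qbinom_def using assms by simp
  have gen: "\<And>x y u v c::real. c \<noteq> 0 \<Longrightarrow> x*y/(u*(v*c))*c = y*(x/(u*v))"
    by simp
  have "qbinom p (Suc m) i * qint p (Suc m - i) = qfact p m * qint p (Suc m) / (qfact p i * (qfact p (m-i) * qint p (Suc (m-i)))) * qint p (Suc (m-i))"
    by (simp only: b1 s)
  also have "\<dots> = qint p (Suc m) * (qfact p m / (qfact p i * qfact p (m-i)))"
    by (rule gen) (rule nz2)
  finally show ?thesis by (simp only: b2)
qed



definition aa :: "real \<Rightarrow> nat \<Rightarrow> nat \<Rightarrow> real" where
  "aa q N m = q ^ ((N - m) choose 2) * qbinom q N m"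
definition Ev :: "real \<Rightarrow> nat \<Rightarrow> nat \<Rightarrow> real" where
  "Ev q N j = (\<Sum>k\<le>N. aa q N (2*k) * qbinom (q^2) k j)"
definition Od :: "real \<Rightarrow> nat \<Rightarrow> nat \<Rightarrow> real" where
  "Od q N j = (\<Sum>k\<le>N. aa q N (Suc (2*k)) * qbinom (q^2) k j)"

lemma choose2_Suc: "(Suc x choose 2) = (x choose 2) + x"
  by (simp add: numeral_2_eq_2)

lemma aa_gt: "m > N \<Longrightarrow> aa q N m = 0" by (simp add: aa_def qbinom_gt)

lemma aa_Suc0: assumes "q \<noteq> -1" shows "aa q (Suc N) 0 = q^N * aa q N 0"
  using assms by (simp add: aa_def qbinom_0 choose2_Suc power_add)

lemma aa_Suc: assumes "q \<noteq> -1"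
  shows "aa q (Suc N) (Suc m) = q^N * aa q N (Suc m) + aa q N m"
proof (cases "m < N")
  case True
  define d where "d = N - Suc m"
  have d1: "N - m = Suc d" and d2: "Suc N - Suc m = Suc d" and d3: "N - Suc m = d"
    using True by (simp_all add: d_def)
  have N: "N = d + Suc m" using True by (simp add: d_def)
  have "aa q (Suc N) (Suc m) = q ^ (Suc d choose 2) * (qbinom q N m + q^(Suc m) * qbinom q N (Suc m))"
    unfolding aa_def d2 qbinom_pascal[OF assms] ..
  also have "\<dots> = q^N * aa q N (Suc m) + aa q N m"
    unfolding aa_def d1 d3 N by (simp add: choose2_Suc power_add algebra_simps)
  finally show ?thesis .
next
  case False
  show ?thesis
  proof (cases "m = N")
    case True
    then show ?thesis using qbinom_diag[OF assms] by (simp add: aa_def qbinom_gt)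
  next
    case False
    with \<open>\<not> m < N\<close> show ?thesis by (simp add: aa_gt)
  qed
qed

lemma Ev_ext: assumes "N \<le> M"
  shows "Ev q N j = (\<Sum>k\<le>M. aa q N (2*k) * qbinom (q^2) k j)"
  unfolding Ev_def
  by (rule sum.mono_neutral_left) (use assms in \<open>auto simp: aa_gt\<close>)

lemma Od_ext: assumes "N \<le> M"
  shows "Od q N j = (\<Sum>k\<le>M. aa q N (Suc (2*k)) * qbinom (q^2) k j)"
  unfolding Od_def
  by (rule sum.mono_neutral_left) (use assms in \<open>auto simp: aa_gt\<close>)

lemma Od_0: "Od q 0 j = 0" by (simp add: Od_def aa_gt)

lemma Od_Suc: assumes "q \<noteq> -1"
  shows "Od q (Suc N) j = q^N * Od q N j + Ev q N j"
proof -
  have "Od q (Suc N) j = (\<Sum>k\<le>Suc N. (q^N * aa q N (Suc (2*k)) + aa q N (2*k)) * qbinom (q^2) k j)"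
    unfolding Od_def aa_Suc[OF assms] ..
  also have "\<dots> = q^N * (\<Sum>k\<le>Suc N. aa q N (Suc (2*k)) * qbinom (q^2) k j)
      + (\<Sum>k\<le>Suc N. aa q N (2*k) * qbinom (q^2) k j)"
    by (simp add: sum.distrib sum_distrib_left algebra_simps)
  also have "\<dots> = q^N * Od q N j + Ev q N j"
    using Od_ext[of N "Suc N" q j] Ev_ext[of N "Suc N" q j] by simp
  finally show ?thesis .
qed

lemma qbinom_Suc_left: assumes "p \<noteq> -1"
  shows "qbinom p (Suc k) j = p^j * qbinom p k j + (if j = 0 then 0 else qbinom p k (j - 1))"
proof (cases j)
  case 0 then show ?thesis using assms by (simp add: qbinom_0)
next
  case (Suc i) then show ?thesis using qbinom_pascal[OF assms, of k i] by simp
qed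

lemma Ev_Suc: assumes "q \<noteq> -1"
  shows "Ev q (Suc N) j = q^N * Ev q N j + (q^2)^j * Od q N j + (if j = 0 then 0 else Od q N (j-1))"
proof -
  have Q: "q^2 \<noteq> -1" by (metis power2_eq_square zero_le_square neg_0_le_iff_le not_one_le_zero)
  have "Ev q (Suc N) j = aa q (Suc N) 0 * qbinom (q^2) 0 j
      + (\<Sum>k\<le>N. aa q (Suc N) (Suc (Suc (2*k))) * qbinom (q^2) (Suc k) j)"
    unfolding Ev_def sum.atMost_Suc_shift by simp
  also have "\<dots> = q^N * (aa q N 0 * qbinom (q^2) 0 j
      + (\<Sum>k\<le>N. aa q N (2 * Suc k) * qbinom (q^2) (Suc k) j))
      + (\<Sum>k\<le>N. aa q N (Suc (2*k)) * qbinom (q^2) (Suc k) j)"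
    unfolding aa_Suc0[OF assms] aa_Suc[OF assms]
    by (simp add: sum.distrib sum_distrib_left algebra_simps)
  also have "aa q N 0 * qbinom (q^2) 0 j
      + (\<Sum>k\<le>N. aa q N (2 * Suc k) * qbinom (q^2) (Suc k) j) = Ev q N j"
    using Ev_ext[of N "Suc N" q j] unfolding sum.atMost_Suc_shift by simp
  also have "(\<Sum>k\<le>N. aa q N (Suc (2*k)) * qbinom (q^2) (Suc k) j)
      = (q^2)^j * Od q N j + (if j = 0 then 0 else Od q N (j-1))"
    unfolding qbinom_Suc_left[OF Q] Od_def
    by (simp add: sum.distrib sum_distrib_left algebra_simps)
  finally show ?thesis by simp
qed

lemma Od_rec: assumes "q \<noteq> -1"
  shows "Od q (Suc (Suc n)) j = (q^Suc n + q^n) * Od q (Suc n) j + ((q^2)^j - (q^2)^n) * Od q n j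
     + (if j = 0 then 0 else Od q n (j-1))"
proof -
  have e: "Ev q n j = Od q (Suc n) j - q^n * Od q n j" using Od_Suc[OF assms, of n j] by simp
  show ?thesis
    unfolding Od_Suc[OF assms, of "Suc n"] Ev_Suc[OF assms, of n] e
    by (simp add: algebra_simps power_mult[symmetric] power2_eq_square[symmetric] power_even_eq)
qed



definition cc :: "real \<Rightarrow> nat \<Rightarrow> real" where "cc q m = (\<Prod>i=1..m. 1 + q^i)"
definition G :: "real \<Rightarrow> nat \<Rightarrow> nat \<Rightarrow> real" where
  "G q n j = cc q (n - 2*j) * qbinom (q^2) (n-j) j"

lemma cc_0[simp]: "cc q 0 = 1" by (simp add: cc_def)
lemma cc_Suc: "cc q (Suc m) = cc q m * (1 + q^Suc m)"
  by (simp add: cc_def prod.nat_ivl_Suc' mult.commute)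

lemma sq_ne: "q^2 \<noteq> (-1::real)"
proof -
  have "q^2 \<ge> (0::real)" by simp
  then show ?thesis by linarith
qed

lemma powsq: "((q::real)^2)^k = (q^k)^2" by (simp add: power_mult[symmetric] mult.commute)

lemma alg1:
  fixes a b q x y z C :: real
  assumes "(1-a^2)*x = (1-a^2*b^2)*y"
  shows "C*(1+a)*(1+a*q)*(z + b^2*x) = a*b^2*(1+q)*(C*(1+a)*x) + (b^2 - (a*b^2)^2)*(C*y) + C*(1+a)*(1+a*q)*z"
proof -
  have "C*(1+a)*(1+a*q)*(z + b^2*x) - (a*b^2*(1+q)*(C*(1+a)*x) + (b^2 - (a*b^2)^2)*(C*y) + C*(1+a)*(1+a*q)*z)
     = C*b^2*((1-a^2)*x - (1-a^2*b^2)*y)"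
    by (simp add: algebra_simps power2_eq_square)
  also have "\<dots> = 0" using assms by simp
  finally show ?thesis by simp
qed

lemma G_rec: assumes q: "q \<noteq> -1"
  shows "G q (Suc (Suc n)) j = q^Suc n * (1+q) * G q (Suc n) j + ((q^2)^j - (q^2)^Suc n) * G q n j
     + (if j = 0 then 0 else G q n (j-1))"
proof (cases j)
  case 0
  have "cc q (Suc (Suc n)) = q^Suc n * (1+q) * cc q (Suc n) + (1 - (q^2)^Suc n) * cc q n"
    unfolding cc_Suc powsq by (simp add: algebra_simps power2_eq_square)
  then show ?thesis using 0 by (simp add: G_def qbinom_0[OF sq_ne])
next
  case (Suc i)
  note j = Suc
  consider "n < 2*i" | "n = 2*i" | "n = 2*i+1" | m' where "n = 2*i + 2 + m'"
  proof -
    have "n < 2*i \<or> n = 2*i \<or> n = 2*i+1 \<or> (\<exists>m'. n = 2*i+2+m')" by presburger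
    then show ?thesis using that by blast
  qed
  then show ?thesis
  proof cases
    case 1
    have "Suc (Suc n) - j < j" "Suc n - j < j" "n - j < j" "n - i < i" using 1 j by auto
    then show ?thesis using j by (simp add: G_def qbinom_gt)
  next
    case 2
    have e1: "Suc (Suc n) - 2*j = 0" "Suc (Suc n) - j = Suc i" "n - 2*i = 0" "n - i = i"
      using 2 j by auto
    have "Suc n - j < j" "n - j < j" using 2 j by auto
    then show ?thesis using j e1 by (simp add: G_def qbinom_gt qbinom_diag[OF sq_ne])
  next
    case 3
    have e1: "Suc (Suc n) - 2*j = 1" "Suc (Suc n) - j = Suc (Suc i)" "n - 2*i = 1" "n - i = Suc i"
      "Suc n - 2*j = 0" "Suc n - j = Suc i" "Suc (Suc n) = 2 * Suc i + 1"
      using 3 j by auto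
    have "n - j < j" using 3 j by auto
    then have g3: "G q n j = 0" by (simp add: G_def qbinom_gt)
    have pas: "qbinom (q^2) (Suc (Suc i)) (Suc i) = qbinom (q^2) (Suc i) i + (q^2)^Suc i"
      using qbinom_pascal[OF sq_ne, of q "Suc i" i] qbinom_diag[OF sq_ne] by simp
    have g1: "G q (Suc (Suc n)) j = (1+q) * (qbinom (q^2) (Suc i) i + (q^2)^Suc i)"
    proof -
      have "G q (Suc (Suc n)) j = cc q 1 * qbinom (q^2) (Suc (Suc i)) (Suc i)"
        by (simp add: G_def 3 j)
      then show ?thesis unfolding pas by (simp add: cc_Suc)
    qed
    have g2: "G q (Suc n) j = 1" by (simp add: G_def 3 j qbinom_diag[OF sq_ne])
    have g4: "G q n (j-1) = (1+q) * qbinom (q^2) (Suc i) i" by (simp add: G_def 3 j cc_Suc)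
    have pw: "q^Suc n = (q^2)^Suc i"
      unfolding power_mult[symmetric] using 3 by (simp add: mult.commute)
    show ?thesis unfolding g1 g2 g3 g4 pw using j by (simp add: algebra_simps)
  next
    case 4
    define N where "N = Suc (Suc (i+m'))"
    define Q where "Q = q^2"
    define a where "a = q^Suc m'"
    define b where "b = q^Suc i"
    define x where "x = qbinom Q N (Suc i)"
    define y where "y = qbinom Q (Suc (i+m')) (Suc i)"
    define z where "z = qbinom Q N i"
    have e: "Suc (Suc n) - 2*j = Suc (Suc m')" "Suc (Suc n) - j = Suc N" "Suc n - 2*j = Suc m'"
      "Suc n - j = N" "n - 2*j = m'" "n - j = Suc (i+m')" "n - 2*(j-1) = Suc (Suc m')" "n - (j-1) = N"
      using 4 j by (auto simp: N_def)
    have pas: "qbinom Q (Suc N) (Suc i) = z + Q^Suc i * x"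
      unfolding x_def z_def Q_def using qbinom_pascal[OF sq_ne] by simp
    have rat: "x * qint Q (Suc m') = qint Q N * y"
      using qbinom_ratio[OF sq_ne, of "Suc i" "Suc (i+m')" q]
      by (simp add: x_def y_def N_def Q_def)
    have "(1 - Q^Suc m')*x = ((1-Q)*qint Q (Suc m'))*x" unfolding qint_geom ..
    also have "\<dots> = (1-Q)*(x * qint Q (Suc m'))" by (simp only: ac_simps)
    also have "\<dots> = (1-Q)*(qint Q N * y)" unfolding rat ..
    also have "\<dots> = ((1-Q)*qint Q N) * y" by (simp only: ac_simps)
    also have "\<dots> = (1 - Q^N)*y" unfolding qint_geom ..
    finally have rel0: "(1 - Q^Suc m')*x = (1 - Q^N)*y" .
    have qN: "q^N = a*b" unfolding N_def a_def b_def by (simp add: power_add[symmetric] add.commute)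
    have rel: "(1-a^2)*x = (1-a^2*b^2)*y"
      using rel0 unfolding Q_def powsq qN a_def by (simp add: power_mult_distrib)
    have qn: "q^Suc n = a*b^2"
    proof -
      have "Suc n = Suc m' + Suc i * 2" using 4 by simp
      then show ?thesis unfolding a_def b_def by (simp only: power_add power_mult)
    qed
    have ccs: "cc q (Suc (Suc m')) = cc q m' * (1+a) * (1+a*q)" "cc q (Suc m') = cc q m' * (1+a)"
      unfolding cc_Suc a_def by (simp_all add: algebra_simps)
    have Qs1: "Q^Suc i = b^2" unfolding Q_def powsq b_def ..
    have Qs2: "Q^Suc n = (a*b^2)^2" unfolding Q_def powsq qn ..
    note Qs = Qs1 Qs2
    have gT: "G q (Suc (Suc n)) j = cc q (Suc (Suc m')) * qbinom Q (Suc N) (Suc i)"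
      by (simp only: G_def e) (simp add: j Q_def)
    have gA: "G q (Suc n) j = cc q (Suc m') * x"
      by (simp only: G_def e) (simp add: x_def j Q_def)
    have gB: "G q n j = cc q m' * y"
      by (simp only: G_def e) (simp add: y_def j Q_def)
    have gC: "G q n (j-1) = cc q (Suc (Suc m')) * z"
      by (simp only: G_def e) (simp add: z_def j Q_def)
    have Qj: "(q^2)^j = b^2" using Qs1 j by (simp add: Q_def)
    have Qn: "(q^2)^Suc n = (a*b^2)^2" using Qs2 by (simp add: Q_def)
    have "G q (Suc (Suc n)) j = cc q m' * (1+a) * (1+a*q) * (z + b^2*x)"
      unfolding gT ccs pas Qs1 ..
    also have "\<dots> = a*b^2*(1+q)*(cc q m'*(1+a)*x) + (b^2 - (a*b^2)^2)*(cc q m'*y) + cc q m' * (1+a) * (1+a*q) * z"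
      by (rule alg1[OF rel])
    also have "\<dots> = q^Suc n * (1+q) * G q (Suc n) j + ((q^2)^j - (q^2)^Suc n) * G q n j
     + (if j = 0 then 0 else G q n (j-1))"
      unfolding gA gB gC ccs qn Qj Qn using j by simp
    finally show ?thesis .
  qed
qed



definition H :: "real \<Rightarrow> nat \<Rightarrow> nat \<Rightarrow> real" where
  "H q N j = (if N = 0 then 0 else G q (N-1) j)"

lemma H_rec: assumes q: "q \<noteq> -1"
  shows "H q (Suc (Suc n)) j = (q^Suc n + q^n) * H q (Suc n) j + ((q^2)^j - (q^2)^n) * H q n j
     + (if j = 0 then 0 else H q n (j-1))"
proof (cases n)
  case 0
  have "G q 1 j = (q+1) * G q 0 j"
  proof (cases j)
    case 0 then show ?thesis by (simp add: G_def qbinom_0[OF sq_ne] cc_Suc)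
  next
    case (Suc i) then show ?thesis by (simp add: G_def qbinom_0_left)
  qed
  then show ?thesis using 0 by (simp add: H_def)
next
  case (Suc n')
  show ?thesis using G_rec[OF q, of n' j] Suc by (simp add: H_def algebra_simps)
qed

lemma Od_H: assumes q: "q \<noteq> -1"
  shows "\<forall>j. Od q N j = H q N j \<and> Od q (Suc N) j = H q (Suc N) j"
proof (induction N)
  case 0
  have "Od q (Suc 0) j = H q (Suc 0) j" for j
    using Od_Suc[OF q, of 0 j] binomial_eq_0[of 0 2] by (simp add: Od_0 H_def Ev_def aa_def G_def qbinom_diag[OF q])
  then show ?case by (simp add: Od_0 H_def)
next
  case (Suc N)
  have "Od q (Suc (Suc N)) j = H q (Suc (Suc N)) j" for j
    unfolding Od_rec[OF q] H_rec[OF q] using Suc.IH by simp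
  then show ?case using Suc.IH by simp
qed

lemma f_nz: assumes "q \<noteq> -1" shows "1 + q^i \<noteq> (0::real)"
proof
  assume "1 + q^i = 0"
  then have h: "q^i = -1" by simp
  then have "\<bar>q\<bar>^i = 1^i" by (simp add: power_abs[symmetric])
  moreover have "i > 0" using h by (cases i) auto
  ultimately have "\<bar>q\<bar> = 1" using power_eq_iff_eq_base[of i "\<bar>q\<bar>" 1] by simp
  then have "q = 1 \<or> q = -1" by linarith
  with h assms show False by auto
qed

lemma L: assumes q: "q \<noteq> -1"
  shows "cc q m * qbinom (q^2) (j+m) j = (\<Prod>i=Suc j..j+m. 1+q^i) * qbinom q (j+m) j"
proof (induction m)
  case 0
  then show ?case by (simp add: qbinom_diag[OF q] qbinom_diag[OF sq_ne])
next
  case (Suc m)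
  define X where "X = qbinom (q^2) (j+m) j"
  define X' where "X' = qbinom (q^2) (Suc (j+m)) j"
  define Y where "Y = qbinom q (j+m) j"
  define Y' where "Y' = qbinom q (Suc (j+m)) j"
  define P where "P = (\<Prod>i=Suc j..j+m. 1+q^i)"
  have rX: "X' * qint (q^2) (Suc m) = qint (q^2) (Suc (j+m)) * X"
    using qbinom_ratio[OF sq_ne, of j "j+m" q] by (simp add: X_def X'_def Suc_diff_le)
  have rY: "Y' * qint q (Suc m) = qint q (Suc (j+m)) * Y"
    using qbinom_ratio[OF q, of j "j+m"] by (simp add: Y_def Y'_def Suc_diff_le)
  have IH: "cc q m * X = P * Y" using Suc.IH by (simp add: X_def Y_def P_def)
  have P': "(\<Prod>i=Suc j..Suc (j + m). 1+q^i) = P * (1 + q^Suc (j+m))"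
    unfolding P_def by (simp add: prod.nat_ivl_Suc' mult.commute)
  define K where "K = (1+q) * qint (q^2) (Suc m)"
  have K2: "K = (1 + q^Suc m) * qint q (Suc m)"
    unfolding K_def qint_sq qint_double ..
  have Knz: "K \<noteq> 0" unfolding K2 by (intro no_zero_divisors f_nz[OF q] qint_nonzero[OF q]) simp
  have W: "(1+q) * qint (q^2) (Suc (j+m)) = (1 + q^Suc (j+m)) * qint q (Suc (j+m))"
    unfolding qint_sq qint_double ..
  have "(cc q m * (1 + q^Suc m) * X') * K = cc q m * (1 + q^Suc m) * ((1+q) * (X' * qint (q^2) (Suc m)))"
    unfolding K_def by (simp add: algebra_simps)
  also have "\<dots> = (cc q m * X) * (1 + q^Suc m) * ((1+q) * qint (q^2) (Suc (j+m)))"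
    unfolding rX by (simp add: algebra_simps)
  also have "\<dots> = (P * Y) * (1 + q^Suc m) * ((1 + q^Suc (j+m)) * qint q (Suc (j+m)))"
    unfolding IH W ..
  also have "\<dots> = P * (1 + q^Suc (j+m)) * (1 + q^Suc m) * (qint q (Suc (j+m)) * Y)"
    by (simp only: ac_simps)
  also have "\<dots> = P * (1 + q^Suc (j+m)) * (1 + q^Suc m) * (Y' * qint q (Suc m))"
    unfolding rY ..
  also have "\<dots> = (P * (1 + q^Suc (j+m)) * Y') * K"
    unfolding K2 by (simp only: ac_simps)
  finally have X: "(cc q m * (1 + q^Suc m) * X') * K = (P * (1 + q^Suc (j+m)) * Y') * K" .
  have eq: "cc q m * (1 + q^Suc m) * X' = P * (1 + q^Suc (j+m)) * Y'"
    using mult_right_cancel[OF Knz] X by (rule iffD1)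
  show ?case unfolding add_Suc_right cc_Suc X'_def[symmetric] Y'_def[symmetric] P' by (rule eq)
qed

lemma G_closed: assumes q: "q \<noteq> -1"
  shows "G q n j = (\<Prod>i=j+1..n-j. 1 + q ^ i) * qbinom q (n - j) j"
proof (cases "2*j \<le> n")
  case True
  then obtain m where n: "n = 2*j + m" using le_Suc_ex by blast
  have "n - 2*j = m" "n - j = j + m" using n by auto
  then show ?thesis using L[OF q, of m j] by (simp add: G_def)
next
  case False
  then show ?thesis by (simp add: G_def qbinom_gt)
qed



lemma S1_Ev: "(\<Sum>k=0..n div 2. q ^ ((n - 2*k) choose 2) * qbinom q n (2*k) * qbinom (q^2) k j) = Ev q n j"
  unfolding Ev_def aa_def
  by (rule sum.mono_neutral_left) (auto simp: qbinom_gt)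

lemma S2_Od: "(\<Sum>k=0..n div 2. q ^ ((n - 2*k) choose 2) * qbinom q (n+1) (2*k+1) * qbinom (q^2) k j) = Od q (Suc n) j"
proof -
  have "(\<Sum>k=0..n div 2. q ^ ((n - 2*k) choose 2) * qbinom q (n+1) (2*k+1) * qbinom (q^2) k j)
     = (\<Sum>k\<le>Suc n. q ^ ((n - 2*k) choose 2) * qbinom q (n+1) (2*k+1) * qbinom (q^2) k j)"
    by (rule sum.mono_neutral_left) (auto simp: qbinom_gt)
  also have "\<dots> = Od q (Suc n) j" unfolding Od_def aa_def by simp
  finally show ?thesis .
qed

lemma gen_ratio1:
  fixes A B c I :: real
  assumes "A \<noteq> 0" "B \<noteq> 0" "c \<noteq> 0" "I \<noteq> 0"
  shows "A*B/(A*(c*B)) * (c*I/I) * 1 = 1"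
  using assms by simp

theorem theorem2p8:
  fixes q :: real and n j :: nat
  assumes "q \<noteq> -1" and "j \<le> n"
  shows "((\<Sum>k=0..n div 2. q ^ ((n - 2*k) choose 2) * qbinom q n (2*k) * qbinom (q^2) k j)
           = (\<Prod>i=1..<n. 1 + q ^ i)
             / ((\<Prod>i=1..j. 1 + q ^ i) * (\<Prod>i=n-j..<n. 1 + q ^ i))
             * (if n = 0 \<and> j = 0 then 1 else qint q n / qint q (n - j))
             * qbinom q (n - j) j)
       \<and> ((\<Sum>k=0..n div 2. q ^ ((n - 2*k) choose 2) * qbinom q (n+1) (2*k+1) * qbinom (q^2) k j)
           = (\<Prod>i=j+1..n-j. 1 + q ^ i) * qbinom q (n - j) j)"
proof
  note q = assms(1)
  have OdG: "Od q (Suc N) i = G q N i" for N i using Od_H[OF q, of N] by (simp add: H_def)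
  have OdH: "Od q N i = H q N i" for N i using Od_H[OF q, of N] by simp
  show "(\<Sum>k=0..n div 2. q ^ ((n - 2*k) choose 2) * qbinom q (n+1) (2*k+1) * qbinom (q^2) k j)
           = (\<Prod>i=j+1..n-j. 1 + q ^ i) * qbinom q (n - j) j"
    unfolding S2_Od OdG G_closed[OF q] ..
  have EvG: "Ev q n j = G q n j - q^n * H q n j"
    using Od_Suc[OF q, of n j] OdG[of n j] OdH[of n j] by simp
  have fnz: "1 + q^i \<noteq> 0" for i using f_nz[OF q] .
  show "(\<Sum>k=0..n div 2. q ^ ((n - 2*k) choose 2) * qbinom q n (2*k) * qbinom (q^2) k j)
           = (\<Prod>i=1..<n. 1 + q ^ i)
             / ((\<Prod>i=1..j. 1 + q ^ i) * (\<Prod>i=n-j..<n. 1 + q ^ i))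
             * (if n = 0 \<and> j = 0 then 1 else qint q n / qint q (n - j))
             * qbinom q (n - j) j"
  proof (cases n)
    case 0
    then have "j = 0" using assms by simp
    have c0: "(0::nat) choose 2 = 0" by (rule binomial_eq_0) simp
    show ?thesis using 0 \<open>j = 0\<close> by (simp add: c0 qbinom_diag[OF q] qbinom_diag[OF sq_ne])
  next
    case (Suc n')
    note n = Suc
    have Hn: "H q n j = G q n' j" using n by (simp add: H_def)
    consider "n < 2*j" | "n = 2*j" | "2*j < n" by linarith
    then show ?thesis
    proof cases
      case 1
      have "n - j < j" "n' - j < j" using 1 n by auto
      then show ?thesis unfolding S1_Ev EvG Hn by (simp add: G_def qbinom_gt)
    next
      case 2
      then obtain i where j: "j = Suc i" using n by (cases j) auto
      have lhs: "Ev q n j = 1"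
      proof -
        have "G q n j = 1" using 2 by (simp add: G_def qbinom_diag[OF sq_ne])
        moreover have "G q n' j = 0" using 2 n j by (simp add: G_def qbinom_gt)
        ultimately show ?thesis unfolding EvG Hn by simp
      qed
      define A where "A = (\<Prod>i=1..<Suc j. 1 + q ^ i)"
      define B where "B = (\<Prod>i=Suc j..<2*j. 1 + q ^ i)"
      have p1: "(\<Prod>i=1..<n. 1 + q ^ i) = A*B" unfolding A_def B_def 2
        by (rule prod.atLeastLessThan_concat[symmetric]) (use j in auto)
      have p2: "(\<Prod>i=1..j. 1 + q ^ i) = A" unfolding A_def atLeastLessThanSuc_atLeastAtMost ..
      have p3: "(\<Prod>i=n-j..<n. 1 + q ^ i) = (1+q^j) * B" unfolding B_def 2
        using prod.atLeast_Suc_lessThan[of j "2*j" "\<lambda>i. 1 + q^i"] j by simp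
      have qi: "qint q n = (1+q^j) * qint q (n-j)" using 2 qint_double[of q j] by simp
      have Anz: "A \<noteq> 0" unfolding A_def using fnz by (simp add: prod_zero_iff)
      have Bnz: "B \<noteq> 0" unfolding B_def using fnz by (simp add: prod_zero_iff)
      have Inz: "qint q (n-j) \<noteq> 0" using qint_nonzero[OF q] j 2 by simp
      have nj: "n - j = j" using 2 by simp
      have "A*B/(A*((1+q^j)*B)) * ((1+q^j)*qint q (n-j)/qint q (n-j)) * qbinom q (n-j) j = 1"
        using gen_ratio1[OF Anz Bnz fnz[of j] Inz] unfolding nj qbinom_diag[OF q] .
      note R = this
      have nz: "\<not> (n = 0 \<and> j = 0)" using n by simp
      show ?thesis unfolding S1_Ev lhs p1 p2 p3 qi if_not_P[OF nz] using R by (rule sym)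
    next
      case 3
      define N where "N = n - j"
      have "N > 0" using 3 N_def by simp
      then obtain N1 where N1: "N = Suc N1" using gr0_conv_Suc by blast
      have jN: "j < N" "j \<le> N1" using 3 N_def N1 by auto
      define A where "A = (\<Prod>i=1..<Suc j. 1 + q ^ i)"
      define B where "B = (\<Prod>i=Suc j..<N. 1 + q ^ i)"
      define Cn where "Cn = (\<Prod>i=N..<n. 1 + q ^ i)"
      define x where "x = qbinom q N j"
      define y where "y = qbinom q N1 j"
      have p1: "(\<Prod>i=1..<n. 1 + q ^ i) = A*B*Cn"
      proof -
        have "(\<Prod>i=1..<N. 1 + q ^ i) = A*B" unfolding A_def B_def
          by (rule prod.atLeastLessThan_concat[symmetric]) (use jN in auto)
        moreover have "(\<Prod>i=1..<n. 1 + q ^ i) = (\<Prod>i=1..<N. 1 + q ^ i) * Cn" unfolding Cn_def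
          by (rule prod.atLeastLessThan_concat[symmetric]) (use jN N_def in auto)
        ultimately show ?thesis by simp
      qed
      have p2: "(\<Prod>i=1..j. 1 + q ^ i) = A" unfolding A_def atLeastLessThanSuc_atLeastAtMost ..
      have p3: "(\<Prod>i=n-j..<n. 1 + q ^ i) = Cn" unfolding Cn_def N_def ..
      have g1: "G q n j = B * (1 + q^N) * x"
      proof -
        have "(\<Prod>i=j+1..n-j. 1 + q ^ i) = B * (1 + q^N)"
          unfolding B_def N_def[symmetric] N1 using jN N1
          by (simp add: prod.atLeastLessThan_Suc atLeastLessThanSuc_atLeastAtMost[symmetric])
        then show ?thesis unfolding G_closed[OF q] x_def N_def by simp
      qed
      have g2: "G q n' j = B * y"
      proof -
        have e: "n' - j = N1" using N1 N_def n by simp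
        have "(\<Prod>i=j+1..n'-j. 1 + q ^ i) = B"
          unfolding B_def e N1 atLeastLessThanSuc_atLeastAtMost by simp
        then show ?thesis unfolding G_closed[OF q] y_def e by simp
      qed
      have rat: "x * qint q (N - j) = qint q N * y"
        using qbinom_ratio[OF q jN(2)] unfolding x_def y_def N1 by simp
      have qn: "qint q n = qint q N + q^N * qint q j"
        using qint_add[of q N j] N_def assms(2) by simp
      have qN: "qint q N = qint q j + q^j * qint q (N-j)"
        using qint_add[of q j "N-j"] jN by simp
      have pn: "q^n = q^N * q^j" using N_def assms(2) by (simp add: power_add[symmetric])
      have INnz: "qint q N \<noteq> 0" using qint_nonzero[OF q] jN by simp
      have key: "((1 + q^N) * x - q^n * y) * qint q N = qint q n * x"
      proof -
        have "((1 + q^N) * x - q^n * y) * qint q N = (1 + q^N) * x * qint q N - q^N * q^j * (qint q N * y)"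
          unfolding pn by (simp add: algebra_simps)
        also have "\<dots> = (1 + q^N) * x * qint q N - q^N * q^j * (x * qint q (N-j))"
          unfolding rat ..
        also have "\<dots> = qint q n * x" unfolding qn qN by (simp add: algebra_simps)
        finally show ?thesis .
      qed
      have key2: "(1 + q^N) * x - q^n * y = qint q n / qint q N * x"
        using key INnz by (simp add: field_simps)
      have Anz: "A \<noteq> 0" unfolding A_def using fnz by (simp add: prod_zero_iff)
      have Cnz: "Cn \<noteq> 0" unfolding Cn_def using fnz by (simp add: prod_zero_iff)
      have "Ev q n j = B * ((1 + q^N) * x - q^n * y)"
        unfolding EvG Hn g1 g2 by (simp add: algebra_simps)
      also have "\<dots> = A*B*Cn / (A*Cn) * (qint q n / qint q N) * x"
        unfolding key2 using Anz Cnz by simp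
      finally show ?thesis unfolding S1_Ev p1 p2 p3 using n by (simp add: N_def x_def)
    qed
  qed
qed

end
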